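(* The topes of any $(n,d)$-pre-trianguloid are pairwise compatible. Consequently, a collection of topes $\{T_v\}$ indexed by the lattice points $v$ of $n\Delta^{d-1}$ is a pre-trianguloid if and only if it is an extended $(n,d)$-tope arrangement.
   Context: Fix positive integers $n,d$; graphs are subgraphs of the complete bipartite graph with left vertices $[n]$ and right vertices $[\bar d]=\{\bar1,\dots,\bar d\}$. $RD(G)$ is the vector of right-vertex degrees; lattice points of $n\Delta^{d-1}$ are vectors in $\mathbb Z_{\ge0}^{[\bar d]}$ with sum $n$; $e_{\bar j}$ is a unit vector. Two acyclic graphs are compatible if whenever both contain a perfect matching between the same $I\subseteq[n]$, $\bar J\subseteq[\bar d]$, these matchings coincide. A tope is a map $T:[n]\to[\bar d]$ (graph $\{(i,T(i))\}$). An extended $(n,d)$-tope arrangement is a collection of pairwise compatible topes $T_v$, one for each lattice point $v$ of $n\Delta^{d-1}$, with $RD(T_v)=v$. An $(n,d)$-pre-trianguloid is a collection of topes $T_v$, one for each lattice point $v$ of $n\Delta^{d-1}$, with $RD(T_v)=v$, such that whenever $v-e_{\bar j}=v'-e_{\bar j'}$ for lattice points $v,v'$ and $\bar j,\bar j'\in[\bar d]$, we have $T_{v'}^{-1}(\bar j)\subseteq T_v^{-1}(\bar j)$. *)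

theory Defs
  imports Main
begin

text \<open>Left vertices [n] = {1..n}, right vertices [d-bar] = {1..d} (encoded as naturals).
  A graph is a set of edges G \<subseteq> {1..n} \<times> {1..d}.\<close>

definition left_verts :: "nat \<Rightarrow> nat set" where
  "left_verts n = {1..n}"

definition right_verts :: "nat \<Rightarrow> nat set" where
  "right_verts d = {1..d}"

definition perfect_matching :: "(nat \<times> nat) set \<Rightarrow> nat set \<Rightarrow> nat set \<Rightarrow> bool" where
  "perfect_matching M I J \<longleftrightarrow> M \<subseteq> I \<times> J \<and>
     (\<forall>i\<in>I. \<exists>!j. (i, j) \<in> M) \<and> (\<forall>j\<in>J. \<exists>!i. (i, j) \<in> M)"

text \<open>Compatibility of two graphs (the paper only uses it for acyclic graphs;
  tope graphs are always acyclic).\<close>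
definition compatible :: "nat \<Rightarrow> nat \<Rightarrow> (nat \<times> nat) set \<Rightarrow> (nat \<times> nat) set \<Rightarrow> bool" where
  "compatible n d G H \<longleftrightarrow>
     (\<forall>I J M M'. I \<subseteq> left_verts n \<longrightarrow> J \<subseteq> right_verts d \<longrightarrow>
        M \<subseteq> G \<longrightarrow> perfect_matching M I J \<longrightarrow>
        M' \<subseteq> H \<longrightarrow> perfect_matching M' I J \<longrightarrow> M = M')"

text \<open>A tope is a map [n] \<rightarrow> [d-bar]; only its values on [n] matter.\<close>
definition is_tope :: "nat \<Rightarrow> nat \<Rightarrow> (nat \<Rightarrow> nat) \<Rightarrow> bool" where
  "is_tope n d T \<longleftrightarrow> (\<forall>i\<in>left_verts n. T i \<in> right_verts d)"

definition tope_graph :: "nat \<Rightarrow> (nat \<Rightarrow> nat) \<Rightarrow> (nat \<times> nat) set" where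
  "tope_graph n T = {(i, T i) | i. i \<in> left_verts n}"

definition RD :: "nat \<Rightarrow> (nat \<Rightarrow> nat) \<Rightarrow> nat \<Rightarrow> nat" where
  "RD n T j = card {i \<in> left_verts n. T i = j}"

definition tope_preimage :: "nat \<Rightarrow> (nat \<Rightarrow> nat) \<Rightarrow> nat \<Rightarrow> nat set" where
  "tope_preimage n T j = {i \<in> left_verts n. T i = j}"

definition lattice_point :: "nat \<Rightarrow> nat \<Rightarrow> (nat \<Rightarrow> nat) \<Rightarrow> bool" where
  "lattice_point n d v \<longleftrightarrow> (\<forall>j. j \<notin> right_verts d \<longrightarrow> v j = 0) \<and>
     (\<Sum>j\<in>right_verts d. v j) = n"

definition minus_unit :: "(nat \<Rightarrow> nat) \<Rightarrow> nat \<Rightarrow> nat \<Rightarrow> int" where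
  "minus_unit v j = (\<lambda>k. int (v k) - (if k = j then 1 else 0))"

definition extended_tope_arrangement ::
  "nat \<Rightarrow> nat \<Rightarrow> ((nat \<Rightarrow> nat) \<Rightarrow> (nat \<Rightarrow> nat)) \<Rightarrow> bool" where
  "extended_tope_arrangement n d Tf \<longleftrightarrow>
     (\<forall>v. lattice_point n d v \<longrightarrow> is_tope n d (Tf v) \<and> RD n (Tf v) = v) \<and>
     (\<forall>v v'. lattice_point n d v \<longrightarrow> lattice_point n d v' \<longrightarrow>
        compatible n d (tope_graph n (Tf v)) (tope_graph n (Tf v')))"

definition pre_trianguloid ::
  "nat \<Rightarrow> nat \<Rightarrow> ((nat \<Rightarrow> nat) \<Rightarrow> (nat \<Rightarrow> nat)) \<Rightarrow> bool" where
  "pre_trianguloid n d Tf \<longleftrightarrow>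
     (\<forall>v. lattice_point n d v \<longrightarrow> is_tope n d (Tf v) \<and> RD n (Tf v) = v) \<and>
     (\<forall>v v' j j'. lattice_point n d v \<longrightarrow> lattice_point n d v' \<longrightarrow>
        j \<in> right_verts d \<longrightarrow> j' \<in> right_verts d \<longrightarrow>
        minus_unit v j = minus_unit v' j' \<longrightarrow>
        tope_preimage n (Tf v') j \<subseteq> tope_preimage n (Tf v) j)"

end

theory Submission
  imports Defs
begin

lemma cyc:
  assumes fin: "finite E" and ne: "E \<noteq> {}" and sub: "f ` E \<subseteq> g ` E"
  shows "\<exists>I\<subseteq>E. I \<noteq> {} \<and> inj_on f I \<and> inj_on g I \<and> f ` I = g ` I"
proof -
  let ?P = "\<lambda>I. I \<subseteq> E \<and> I \<noteq> {} \<and> f ` I \<subseteq> g ` I"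
  obtain I0 where P0: "?P I0" and mn: "\<And>I. ?P I \<Longrightarrow> card I0 \<le> card I"
  proof -
    have "?P E" using assms by blast
    from ex_has_least_nat[of ?P E card, OF this] show ?thesis using that by blast
  qed
  have ex: "\<forall>x\<in>f ` I0. \<exists>i. i \<in> I0 \<and> g i = x" using P0 by (metis (no_types, lifting) image_iff subset_iff)
  from bchoice[OF ex] obtain h where hh: "\<forall>x\<in>f ` I0. h x \<in> I0 \<and> g (h x) = x" ..
  have h: "h x \<in> I0 \<and> g (h x) = x" if "x \<in> f ` I0" for x using hh that by blast
  let ?I = "h ` f ` I0"
  have subI: "?I \<subseteq> I0" using h by blast
  have gI: "g ` ?I = f ` I0"
  proof
    show "g ` ?I \<subseteq> f ` I0" using h by auto
    show "f ` I0 \<subseteq> g ` ?I"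
    proof
      fix x assume "x \<in> f ` I0"
      then have "g (h x) = x" "h x \<in> ?I" using h by auto
      then show "x \<in> g ` ?I" by (metis image_eqI)
    qed
  qed
  have p1: "?I \<subseteq> E" using subI P0 by (meson subset_trans)
  have p2: "?I \<noteq> {}" using P0 by (simp add: image_is_empty)
  have p3: "f ` ?I \<subseteq> g ` ?I" unfolding gI using subI by (rule image_mono)
  have "?P ?I" using p1 p2 p3 by (intro conjI)
  then have le: "card I0 \<le> card ?I" by (rule mn)
  have fin0: "finite I0" using P0 fin finite_subset by blast
  have eq: "?I = I0" using card_seteq[OF fin0 subI le] .
  have geq: "g ` I0 = f ` I0" using gI eq by simp
  have "card ?I \<le> card (f ` I0)" by (rule card_image_le) (simp add: fin0)
  then have c1: "card I0 \<le> card (f ` I0)" using le by linarith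
  have injf: "inj_on f I0" using c1 card_image_le[OF fin0, of f] inj_on_iff_eq_card[OF fin0, of f] by simp
  have injg: "inj_on g I0" using c1 geq card_image_le[OF fin0, of g] inj_on_iff_eq_card[OF fin0, of g] by simp
  show ?thesis apply (rule exI[of _ I0]) using P0 injf injg geq by simp
qed

lemma compat_contra:
  assumes "compatible n d (tope_graph n T) (tope_graph n T')" "is_tope n d T" "is_tope n d T'"
    "I \<subseteq> left_verts n" "inj_on T I" "inj_on T' I" "T ` I = T' ` I" "i \<in> I" "T i \<noteq> T' i"
  shows False
proof -
  let ?M = "{(i, T i) | i. i \<in> I}" and ?M' = "{(i, T' i) | i. i \<in> I}" and ?J = "T ` I"
  have J: "?J \<subseteq> right_verts d" using assms(2,4) unfolding is_tope_def by auto
  have M: "?M \<subseteq> tope_graph n T" "?M' \<subseteq> tope_graph n T'" using assms(4) unfolding tope_graph_def by auto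
  have pm: "perfect_matching ?M I ?J" using assms(5) unfolding perfect_matching_def inj_on_def by auto
  have pm0: "perfect_matching ?M' I (T' ` I)" using assms(6) unfolding perfect_matching_def inj_on_def by auto
  have pm': "perfect_matching ?M' I ?J" using pm0 assms(7) by simp
  have "?M = ?M'" using assms(1) J M pm pm' assms(4) unfolding compatible_def by blast
  then have "(i, T i) \<in> ?M'" using assms(8) by blast
  then show False using assms(9) by auto
qed

lemma pm_graph:
  assumes MG: "M \<subseteq> tope_graph n T" and pm: "perfect_matching M I J" and I: "I \<subseteq> left_verts n"
  shows "M = {(i, T i) | i. i \<in> I} \<and> T ` I = J \<and> inj_on T I"
proof -
  have gr: "\<And>i j. (i, j) \<in> M \<Longrightarrow> j = T i" using MG unfolding tope_graph_def by auto
  have sub: "M \<subseteq> I \<times> J" and ex1: "\<And>i. i \<in> I \<Longrightarrow> \<exists>!j. (i, j) \<in> M"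
    and ex2: "\<And>j. j \<in> J \<Longrightarrow> \<exists>!i. (i, j) \<in> M" using pm unfolding perfect_matching_def by auto
  have inM: "(i, T i) \<in> M" if iI: "i \<in> I" for i
  proof -
    from ex1_implies_ex[OF ex1[OF iI]] obtain j where "(i, j) \<in> M" ..
    then show ?thesis using gr by auto
  qed
  have Meq: "M = {(i, T i) | i. i \<in> I}"
  proof (rule set_eqI)
    fix p show "p \<in> M \<longleftrightarrow> p \<in> {(i, T i) | i. i \<in> I}"
    proof
      assume "p \<in> M"
      moreover obtain a b where p: "p = (a, b)" by (cases p)
      ultimately have "(a, b) \<in> M" by simp
      then have "a \<in> I" "b = T a" using sub gr by auto
      then show "p \<in> {(i, T i) | i. i \<in> I}" using p by simp
    next
      assume "p \<in> {(i, T i) | i. i \<in> I}"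
      then obtain i where "p = (i, T i)" "i \<in> I" by auto
      then show "p \<in> M" using inM by simp
    qed
  qed
  have img1: "T ` I \<subseteq> J"
  proof
    fix x assume "x \<in> T ` I"
    then obtain i where "i \<in> I" "x = T i" by auto
    then show "x \<in> J" using inM sub by auto
  qed
  have img2: "J \<subseteq> T ` I"
  proof
    fix j assume jJ: "j \<in> J"
    from ex1_implies_ex[OF ex2[OF jJ]] obtain i where "(i, j) \<in> M" ..
    then have "i \<in> I" "j = T i" using sub gr by auto
    then show "j \<in> T ` I" by simp
  qed
  have inj: "inj_on T I"
  proof (rule inj_onI)
    fix x y assume xy: "x \<in> I" "y \<in> I" "T x = T y"
    then have "T x \<in> J" using img1 by auto
    then have u: "\<exists>!i. (i, T x) \<in> M" using ex2 by simp
    have m1: "(x, T x) \<in> M" using inM[OF xy(1)] .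
    have m2: "(y, T x) \<in> M" using inM[OF xy(2)] xy(3) by simp
    show "x = y"
    proof (rule ex1E[OF u])
      fix z assume "(z, T x) \<in> M" and zz: "\<forall>w. (w, T x) \<in> M \<longrightarrow> w = z"
      have "x = z" using zz m1 by simp
      moreover have "y = z" using zz m2 by simp
      ultimately show "x = y" by simp
    qed
  qed
  show ?thesis using Meq img1 img2 inj by simp
qed

lemma compat_intro:
  assumes H: "\<And>I. I \<subseteq> left_verts n \<Longrightarrow> inj_on T I \<Longrightarrow> inj_on T' I \<Longrightarrow> T ` I = T' ` I \<Longrightarrow> (\<forall>i\<in>I. T i = T' i)"
  shows "compatible n d (tope_graph n T) (tope_graph n T')"
  unfolding compatible_def
proof (intro allI impI)
  fix I J M M'
  assume I: "I \<subseteq> left_verts n" and "J \<subseteq> right_verts d" and MG: "M \<subseteq> tope_graph n T"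
    and pm: "perfect_matching M I J" and MG': "M' \<subseteq> tope_graph n T'" and pm': "perfect_matching M' I J"
  have A: "M = {(i, T i) | i. i \<in> I} \<and> T ` I = J \<and> inj_on T I" using pm_graph[OF MG pm I] .
  have B: "M' = {(i, T' i) | i. i \<in> I} \<and> T' ` I = J \<and> inj_on T' I" using pm_graph[OF MG' pm' I] .
  have "\<forall>i\<in>I. T i = T' i" using H[OF I] A B by metis
  then have "(\<lambda>i. (i, T i)) ` I = (\<lambda>i. (i, T' i)) ` I" by (intro image_cong) auto
  then have "{(i, T i) | i. i \<in> I} = {(i, T' i) | i. i \<in> I}" by (simp only: Setcompr_eq_image)
  then show "M = M'" using A B by simp
qed

definition add1 :: "(nat \<Rightarrow> nat) \<Rightarrow> nat \<Rightarrow> nat \<Rightarrow> nat" where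
  "add1 y a = (\<lambda>k. y k + (if k = a then 1 else 0))"

definition zo :: "nat \<Rightarrow> (nat \<Rightarrow> nat) \<Rightarrow> bool" where
  "zo d y \<longleftrightarrow> (\<forall>j. j \<notin> {1..d} \<longrightarrow> y j = 0)"

definition PT :: "nat set \<Rightarrow> nat \<Rightarrow> ((nat \<Rightarrow> nat) \<Rightarrow> nat \<Rightarrow> nat) \<Rightarrow> bool" where
  "PT L d Tf \<longleftrightarrow>
     (\<forall>v. zo d v \<and> sum v {1..d} = card L \<longrightarrow>
        (\<forall>i\<in>L. Tf v i \<in> {1..d}) \<and> (\<forall>a. card {i\<in>L. Tf v i = a} = v a)) \<and>
     (\<forall>y a b. zo d y \<longrightarrow> sum y {1..d} + 1 = card L \<longrightarrow> a \<in> {1..d} \<longrightarrow> b \<in> {1..d} \<longrightarrow>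
        {i\<in>L. Tf (add1 y b) i = a} \<subseteq> {i\<in>L. Tf (add1 y a) i = a})"

lemma add1_sum: "a \<in> {1..d} \<Longrightarrow> sum (add1 y a) {1..d} = sum y {1..d} + 1"
  unfolding add1_def by (simp add: sum.distrib)

lemma add1_zo: "zo d y \<Longrightarrow> a \<in> {1..d} \<Longrightarrow> zo d (add1 y a)"
  unfolding zo_def add1_def by auto

lemma add1_comm: "add1 (add1 y a) b = add1 (add1 y b) a"
  unfolding add1_def by auto

lemma add1_app: "add1 y a k = y k + (if k = a then 1 else 0)"
  unfolding add1_def by simp

lemma PT_lat:
  assumes "PT L d Tf" "zo d y" "sum y {1..d} + 1 = card L" "a \<in> {1..d}"
  shows "(\<forall>i\<in>L. Tf (add1 y a) i \<in> {1..d}) \<and> (\<forall>c. card {i\<in>L. Tf (add1 y a) i = c} = add1 y a c)"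
proof -
  have "zo d (add1 y a)" "sum (add1 y a) {1..d} = card L" using assms add1_zo add1_sum by auto
  then show ?thesis using assms(1) unfolding PT_def by blast
qed

lemma PT_ax:
  assumes "PT L d Tf" "zo d y" "sum y {1..d} + 1 = card L" "a \<in> {1..d}" "b \<in> {1..d}"
  shows "{i\<in>L. Tf (add1 y b) i = a} \<subseteq> {i\<in>L. Tf (add1 y a) i = a}"
  using assms unfolding PT_def by blast

lemma fixpt:
  assumes "PT L d Tf" "zo d y" "sum y {1..d} + 1 = card L" "b \<in> {1..d}" "l \<in> L"
  shows "Tf (add1 y b) l \<in> {1..d} \<and> Tf (add1 y (Tf (add1 y b) l)) l = Tf (add1 y b) l"
proof -
  let ?a = "Tf (add1 y b) l"
  have a: "?a \<in> {1..d}" using PT_lat[OF assms(1-4)] assms(5) by blast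
  have "l \<in> {i\<in>L. Tf (add1 y b) i = ?a}" using assms(5) by simp
  then have "l \<in> {i\<in>L. Tf (add1 y ?a) i = ?a}" using PT_ax[OF assms(1-3) a assms(4)] by blast
  then show ?thesis using a by simp
qed


lemma LC:
  assumes PT: "PT L d Tf" and fin: "finite L" and zy: "zo d y" and sy: "sum y {1..d} + 1 = card L"
    and b: "b \<in> {1..d}" and c: "c \<in> {1..d}" and D: "D \<subseteq> L" "D \<noteq> {}"
    and ib: "inj_on (Tf (add1 y b)) D" and ic: "inj_on (Tf (add1 y c)) D"
    and im: "Tf (add1 y b) ` D = Tf (add1 y c) ` D" and df: "\<forall>i\<in>D. Tf (add1 y b) i \<noteq> Tf (add1 y c) i"
  shows False
proof -
  define \<tau> where "\<tau> x = Tf (add1 y x)" for x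
  let ?A = "\<tau> b ` D"
  have finD: "finite D" using fin D finite_subset by auto
  have AC: "?A \<subseteq> {1..d}" using PT_lat[OF PT zy sy b] D unfolding \<tau>_def by auto
  have S: "\<And>a x p. a \<in> {1..d} \<Longrightarrow> x \<in> {1..d} \<Longrightarrow> p \<in> L \<Longrightarrow> \<tau> x p = a \<Longrightarrow> \<tau> a p = a"
  proof -
    fix a x p assume h: "a \<in> {1..d}" "x \<in> {1..d}" "p \<in> L" "\<tau> x p = a"
    have "p \<in> {i\<in>L. Tf (add1 y x) i = a}" using h unfolding \<tau>_def by simp
    then have "p \<in> {i\<in>L. Tf (add1 y a) i = a}" using PT_ax[OF PT zy sy h(1) h(2)] by blast
    then show "\<tau> a p = a" unfolding \<tau>_def by simp
  qed
  have two: "\<exists>p\<in>D. \<exists>p'\<in>D. p \<noteq> p' \<and> \<tau> a p = a \<and> \<tau> a p' = a \<and> \<tau> b p = a" if aA: "a \<in> ?A" for a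
  proof -
    obtain p where p: "p \<in> D" "\<tau> b p = a" using aA by auto
    have "a \<in> \<tau> c ` D" using aA im unfolding \<tau>_def by simp
    then obtain p' where p': "p' \<in> D" "\<tau> c p' = a" by auto
    have ne: "p \<noteq> p'" using df p p' unfolding \<tau>_def by auto
    have aC: "a \<in> {1..d}" using aA AC by blast
    have pL: "p \<in> L" "p' \<in> L" using p(1) p'(1) D(1) by blast+
    have t1: "\<tau> a p = a" using S[OF aC b pL(1) p(2)] .
    have t2: "\<tau> a p' = a" using S[OF aC c pL(2) p'(2)] .
    show ?thesis
      apply (rule bexI[where x=p]) apply (rule bexI[where x=p'])
      using ne t1 t2 p p' by simp_all
  qed
  obtain r where r: "r \<in> ?A" using D by auto
  have rC: "r \<in> {1..d}" using r AC by auto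
  have cov: "\<exists>q\<in>D. \<tau> r q = a" if aA: "a \<in> ?A" for a
  proof (cases "a = r")
    case True
    from two[OF aA] obtain p where "p \<in> D" "\<tau> a p = a" by auto
    then show ?thesis using True by auto
  next
    case False
    from two[OF aA] obtain p p' where pp: "p \<in> D" "p' \<in> D" "p \<noteq> p'" "\<tau> a p = a" "\<tau> a p' = a" by auto
    show ?thesis
    proof (rule ccontr)
      assume "\<not> ?thesis"
      then have np: "\<tau> r p \<noteq> a" "\<tau> r p' \<noteq> a" using pp by auto
      have aC: "a \<in> {1..d}" using aA AC by auto
      let ?Pre = "{i\<in>L. \<tau> r i = a}" and ?S = "{i\<in>L. \<tau> a i = a}"
      have sub: "?Pre \<subseteq> ?S" using PT_ax[OF PT zy sy aC rC] unfolding \<tau>_def .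
      have cPre: "card ?Pre = y a" using PT_lat[OF PT zy sy rC] False unfolding \<tau>_def by (simp add: add1_app)
      have cS: "card ?S = y a + 1" using PT_lat[OF PT zy sy aC] unfolding \<tau>_def by (simp add: add1_app)
      have sub2: "insert p (insert p' ?Pre) \<subseteq> ?S" using sub pp D by auto
      have finS: "finite ?S" using fin by simp
      have "card (insert p (insert p' ?Pre)) = y a + 2" using np pp cPre fin by simp
      moreover have "card (insert p (insert p' ?Pre)) \<le> card ?S" using card_mono[OF finS sub2] .
      ultimately show False using cS by simp
    qed
  qed
  have Asub: "?A \<subseteq> \<tau> r ` D"
  proof
    fix a assume "a \<in> ?A"
    from cov[OF this] obtain q where "q \<in> D" "\<tau> r q = a" by blast
    then show "a \<in> \<tau> r ` D" by (metis image_eqI)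
  qed
  from two[OF r] obtain p p' where pp: "p \<in> D" "p' \<in> D" "p \<noteq> p'" "\<tau> r p = r" "\<tau> r p' = r" by auto
  have ninj: "\<not> inj_on (\<tau> r) D"
  proof
    assume "inj_on (\<tau> r) D"
    then have "p = p'" using inj_onD[of "\<tau> r" D p p'] pp by simp
    then show False using pp(3) by simp
  qed
  have "card (\<tau> r ` D) < card D"
  proof -
    have "card (\<tau> r ` D) \<le> card D" by (rule card_image_le[OF finD])
    moreover have "card (\<tau> r ` D) \<noteq> card D" using ninj inj_on_iff_eq_card[OF finD] by auto
    ultimately show ?thesis by simp
  qed
  moreover have "card ?A = card D" using ib card_image unfolding \<tau>_def by blast
  moreover have "card ?A \<le> card (\<tau> r ` D)" using card_mono[OF finite_imageI[OF finD] Asub] .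
  ultimately show False by simp
qed

lemma cardL: "finite L \<Longrightarrow> l \<in> L \<Longrightarrow>
  card {i\<in>L-{l}. f i = a} = card {i\<in>L. f i = a} - (if f l = a then 1 else 0)"
proof -
  assume "finite L" "l \<in> L"
  have "{i\<in>L-{l}. f i = a} = {i\<in>L. f i = a} - {l}" by auto
  then show ?thesis using \<open>l \<in> L\<close> by (simp add: card_Diff_singleton_if)
qed

lemma IND:
  assumes PT: "PT L d Tf" and fin: "finite L" and zy: "zo d y" and sy: "sum y {1..d} + 1 = card L"
    and c: "c \<in> {1..d}" and c': "c' \<in> {1..d}" and l: "l \<in> L"
    and fc: "Tf (add1 y c) l = c" and fc': "Tf (add1 y c') l = c'"
  shows "\<forall>i\<in>L-{l}. Tf (add1 y c) i = Tf (add1 y c') i"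
proof (rule ccontr)
  assume nt: "\<not> ?thesis"
  define \<tau> where "\<tau> x = Tf (add1 y x)" for x
  let ?E = "{i\<in>L-{l}. \<tau> c i \<noteq> \<tau> c' i}"
  have ne: "?E \<noteq> {}" using nt unfolding \<tau>_def by auto
  have finE: "finite ?E" using fin by simp
  have cnt: "card {i\<in>L-{l}. \<tau> x i = a} = y a" if x: "x \<in> {1..d}" "\<tau> x l = x" for x a
  proof -
    have "card {i\<in>L-{l}. \<tau> x i = a} = card {i\<in>L. \<tau> x i = a} - (if \<tau> x l = a then 1 else 0)"
      by (rule cardL[OF fin l])
    also have "card {i\<in>L. \<tau> x i = a} = add1 y x a" using PT_lat[OF PT zy sy x(1)] unfolding \<tau>_def by blast
    finally show ?thesis using x(2) by (simp add: add1_app)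
  qed
  have sub: "\<tau> c ` ?E \<subseteq> \<tau> c' ` ?E"
  proof
    fix a assume "a \<in> \<tau> c ` ?E"
    then obtain i where i: "i \<in> ?E" "\<tau> c i = a" by blast
    let ?P = "{i\<in>L-{l}. \<tau> c i = a}" and ?Q = "{i\<in>L-{l}. \<tau> c' i = a}"
    have cP: "card ?P = y a" using cnt[of c a] c fc unfolding \<tau>_def by simp
    have cQ: "card ?Q = y a" using cnt[of c' a] c' fc' unfolding \<tau>_def by simp
    have iP: "i \<in> ?P" "i \<notin> ?Q" using i by auto
    have "\<not> ?Q \<subseteq> ?P"
    proof
      assume "?Q \<subseteq> ?P"
      then have "?Q = ?P" using card_subset_eq[of ?P ?Q] fin cP cQ by simp
      then show False using iP by blast
    qed
    then obtain i' where i': "i' \<in> ?Q" "i' \<notin> ?P" by blast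
    then have "i' \<in> ?E" by auto
    moreover have "\<tau> c' i' = a" using i' by simp
    ultimately show "a \<in> \<tau> c' ` ?E" by (metis image_eqI)
  qed
  obtain I where I: "I \<subseteq> ?E" "I \<noteq> {}" "inj_on (\<tau> c) I" "inj_on (\<tau> c') I" "\<tau> c ` I = \<tau> c' ` I"
    using cyc[OF finE ne sub] by blast
  show False
  proof (rule LC[OF PT fin zy sy c c'])
    show "I \<subseteq> L" using I(1) by auto
    show "I \<noteq> {}" by fact
    show "inj_on (Tf (add1 y c)) I" using I(3) unfolding \<tau>_def .
    show "inj_on (Tf (add1 y c')) I" using I(4) unfolding \<tau>_def .
    show "Tf (add1 y c) ` I = Tf (add1 y c') ` I" using I(5) unfolding \<tau>_def .
    show "\<forall>i\<in>I. Tf (add1 y c) i \<noteq> Tf (add1 y c') i" using I(1) unfolding \<tau>_def by auto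
  qed
qed


definition cfix :: "((nat \<Rightarrow> nat) \<Rightarrow> nat \<Rightarrow> nat) \<Rightarrow> nat \<Rightarrow> nat \<Rightarrow> (nat \<Rightarrow> nat) \<Rightarrow> nat" where
  "cfix Tf d l x = (SOME c. c \<in> {1..d} \<and> Tf (add1 x c) l = c)"

definition contr :: "((nat \<Rightarrow> nat) \<Rightarrow> nat \<Rightarrow> nat) \<Rightarrow> nat \<Rightarrow> nat \<Rightarrow> (nat \<Rightarrow> nat) \<Rightarrow> nat \<Rightarrow> nat" where
  "contr Tf d l = (\<lambda>x. Tf (add1 x (cfix Tf d l x)))"

lemma cfix_prop:
  assumes PT: "PT L d Tf" and zx: "zo d x" and sx: "sum x {1..d} + 1 = card L" and l: "l \<in> L" and d: "1 \<le> d"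
  shows "cfix Tf d l x \<in> {1..d} \<and> Tf (add1 x (cfix Tf d l x)) l = cfix Tf d l x"
proof -
  have one: "(1::nat) \<in> {1..d}" using d by simp
  have "\<exists>c. c \<in> {1..d} \<and> Tf (add1 x c) l = c"
    using fixpt[OF PT zx sx one l] by blast
  then show ?thesis unfolding cfix_def by (rule someI_ex)
qed

lemma contr_eq:
  assumes PT: "PT L d Tf" and fin: "finite L" and zx: "zo d x" and sx: "sum x {1..d} + 1 = card L"
    and l: "l \<in> L" and d: "1 \<le> d" and c: "c \<in> {1..d}" and fc: "Tf (add1 x c) l = c"
  shows "\<forall>i\<in>L-{l}. contr Tf d l x i = Tf (add1 x c) i"
proof -
  have cp: "cfix Tf d l x \<in> {1..d}" "Tf (add1 x (cfix Tf d l x)) l = cfix Tf d l x"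
    using cfix_prop[OF PT zx sx l d] by auto
  show ?thesis using IND[OF PT fin zx sx cp(1) c l cp(2) fc] unfolding contr_def by simp
qed

lemma CON:
  assumes PT: "PT L d Tf" and fin: "finite L" and l: "l \<in> L" and d: "1 \<le> d"
  shows "PT (L - {l}) d (contr Tf d l)"
  unfolding PT_def
proof (intro conjI allI impI)
  have cL: "card (L - {l}) + 1 = card L" using fin l
    by (metis Suc_eq_plus1 card_Suc_Diff1)
  fix v assume v: "zo d v \<and> sum v {1..d} = card (L - {l})"
  have zv: "zo d v" and sv: "sum v {1..d} + 1 = card L" using v cL by auto
  let ?c = "cfix Tf d l v"
  have cp: "?c \<in> {1..d}" "Tf (add1 v ?c) l = ?c" using cfix_prop[OF PT zv sv l d] by auto
  have lat: "(\<forall>i\<in>L. Tf (add1 v ?c) i \<in> {1..d}) \<and> (\<forall>a. card {i\<in>L. Tf (add1 v ?c) i = a} = add1 v ?c a)"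
    using PT_lat[OF PT zv sv cp(1)] .
  show "\<forall>i\<in>L - {l}. contr Tf d l v i \<in> {1..d}" using lat unfolding contr_def by auto
  fix a
  have "card {i \<in> L - {l}. Tf (add1 v ?c) i = a} = card {i\<in>L. Tf (add1 v ?c) i = a} - (if Tf (add1 v ?c) l = a then 1 else 0)"
    by (rule cardL[OF fin l])
  also have "\<dots> = v a" using lat cp(2) by (simp add: add1_app)
  finally show "card {i \<in> L - {l}. contr Tf d l v i = a} = v a" unfolding contr_def by simp
next
  have cL: "card (L - {l}) + 1 = card L" using fin l
    by (metis Suc_eq_plus1 card_Suc_Diff1)
  fix y a b
  assume zy: "zo d y" and sy: "sum y {1..d} + 1 = card (L - {l})" and a: "a \<in> {1..d}" and b: "b \<in> {1..d}"
  let ?xa = "add1 y a" and ?xb = "add1 y b"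
  have zxa: "zo d ?xa" and zxb: "zo d ?xb" using zy a b add1_zo by auto
  have sxa: "sum ?xa {1..d} + 1 = card L" and sxb: "sum ?xb {1..d} + 1 = card L"
    using sy cL add1_sum[OF a, of y] add1_sum[OF b, of y] by auto
  let ?e = "Tf (add1 ?xa b) l"
  have e1: "?e \<in> {1..d}" "Tf (add1 ?xa ?e) l = ?e" using fixpt[OF PT zxa sxa b l] by auto
  have comm: "add1 ?xb a = add1 ?xa b" by (rule add1_comm)
  have e2: "Tf (add1 ?xb ?e) l = ?e" using fixpt[OF PT zxb sxb a l] comm by simp
  have eqa: "\<forall>i\<in>L-{l}. contr Tf d l ?xa i = Tf (add1 ?xa ?e) i"
    using contr_eq[OF PT fin zxa sxa l d e1(1) e1(2)] .
  have eqb: "\<forall>i\<in>L-{l}. contr Tf d l ?xb i = Tf (add1 ?xb ?e) i"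
    using contr_eq[OF PT fin zxb sxb l d e1(1) e2] .
  let ?z = "add1 y ?e"
  have zz: "zo d ?z" using zy e1(1) add1_zo by auto
  have sz: "sum ?z {1..d} + 1 = card L" using sy cL add1_sum[OF e1(1), of y] by auto
  have ax: "{i\<in>L. Tf (add1 ?z b) i = a} \<subseteq> {i\<in>L. Tf (add1 ?z a) i = a}"
    using PT_ax[OF PT zz sz a b] .
  have ca: "add1 ?xa ?e = add1 ?z a" and cb: "add1 ?xb ?e = add1 ?z b" by (rule add1_comm)+
  show "{i \<in> L - {l}. contr Tf d l (add1 y b) i = a} \<subseteq> {i \<in> L - {l}. contr Tf d l (add1 y a) i = a}"
  proof
    fix i assume "i \<in> {i \<in> L - {l}. contr Tf d l (add1 y b) i = a}"
    then have i: "i \<in> L - {l}" "contr Tf d l ?xb i = a" by auto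
    then have "Tf (add1 ?z b) i = a" using eqb cb by auto
    then have "Tf (add1 ?z a) i = a" using ax i(1) by blast
    then have "contr Tf d l ?xa i = a" using eqa ca i(1) by auto
    then show "i \<in> {i \<in> L - {l}. contr Tf d l (add1 y a) i = a}" using i(1) by simp
  qed
qed


lemma card_inj_pre:
  assumes fin: "finite L" and inj: "inj_on f L"
  shows "card {i\<in>L. f i = a} = (if a \<in> f ` L then 1 else 0)"
proof (cases "a \<in> f ` L")
  case True
  then obtain i0 where i0: "i0 \<in> L" "f i0 = a" by auto
  have "{i\<in>L. f i = a} = {i0}"
  proof
    show "{i\<in>L. f i = a} \<subseteq> {i0}"
    proof
      fix i assume "i \<in> {i\<in>L. f i = a}"
      then have "i \<in> L" "f i = f i0" using i0 by auto
      then have "i = i0" using inj_onD[OF inj _ _ i0(1)] by blast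
      then show "i \<in> {i0}" by simp
    qed
    show "{i0} \<subseteq> {i\<in>L. f i = a}" using i0 by simp
  qed
  then show ?thesis using True by simp
next
  case False
  then have "{i\<in>L. f i = a} = {}" by auto
  then show ?thesis using False by (simp only: card.empty if_False)
qed

lemma shrink:
  assumes PT: "PT L d Tf" and fin: "finite L" and zu: "zo d u" and su: "sum u {1..d} = card L" and l: "l \<in> L"
  shows "Tf u l \<in> {1..d} \<and> zo d (u(Tf u l := u (Tf u l) - 1)) \<and>
    sum (u(Tf u l := u (Tf u l) - 1)) {1..d} + 1 = card L \<and> add1 (u(Tf u l := u (Tf u l) - 1)) (Tf u l) = u"
proof -
  let ?c = "Tf u l"
  let ?x = "u(?c := u ?c - 1)"
  have lat: "(\<forall>i\<in>L. Tf u i \<in> {1..d}) \<and> (\<forall>a. card {i\<in>L. Tf u i = a} = u a)"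
    using PT zu su unfolding PT_def by blast
  have c: "?c \<in> {1..d}" using lat l by blast
  have "l \<in> {i\<in>L. Tf u i = ?c}" using l by simp
  then have "card {i\<in>L. Tf u i = ?c} > 0" using fin card_gt_0_iff by fastforce
  then have uc: "u ?c \<ge> 1" using lat by simp
  have ad: "add1 ?x ?c = u"
  proof
    fix k show "add1 ?x ?c k = u k" using uc by (simp add: add1_app)
  qed
  have zx: "zo d ?x" using zu c unfolding zo_def by auto
  have "sum (add1 ?x ?c) {1..d} = sum ?x {1..d} + 1" using add1_sum[OF c] .
  then have "sum ?x {1..d} + 1 = card L" using ad su by simp
  then show ?thesis using c zx ad by simp
qed

lemma MAIN:
  assumes d: "1 \<le> d"
  shows "finite L \<Longrightarrow> PT L d Tf \<Longrightarrow> zo d u \<Longrightarrow> sum u {1..d} = card L \<Longrightarrow> zo d w \<Longrightarrow> sum w {1..d} = card L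
    \<Longrightarrow> D \<subseteq> L \<Longrightarrow> inj_on (Tf u) D \<Longrightarrow> inj_on (Tf w) D \<Longrightarrow> Tf u ` D = Tf w ` D \<Longrightarrow> i \<in> D
    \<Longrightarrow> Tf u i \<noteq> Tf w i \<Longrightarrow> False"
proof (induction "card L" arbitrary: L Tf u w D i rule: less_induct)
  case less
  have fin: "finite L" and PT: "PT L d Tf" and zu: "zo d u" and su: "sum u {1..d} = card L"
    and zw: "zo d w" and sw: "sum w {1..d} = card L" and D: "D \<subseteq> L" and iu: "inj_on (Tf u) D"
    and iw: "inj_on (Tf w) D" and im: "Tf u ` D = Tf w ` D" and i: "i \<in> D" and df: "Tf u i \<noteq> Tf w i"
    using less.prems by auto
  show False
  proof (cases "D = L")
    case True
    have latu: "\<forall>a. card {i\<in>L. Tf u i = a} = u a" using PT zu su unfolding PT_def by blast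
    have latw: "\<forall>a. card {i\<in>L. Tf w i = a} = w a" using PT zw sw unfolding PT_def by blast
    have "u = w"
    proof
      fix a
      have "u a = card {i\<in>L. Tf u i = a}" using latu by simp
      also have "\<dots> = (if a \<in> Tf u ` L then 1 else 0)" using card_inj_pre[OF fin, of "Tf u" a] iu True by (simp only:)
      also have "\<dots> = (if a \<in> Tf w ` L then 1 else 0)" using im True by simp
      also have "\<dots> = card {i\<in>L. Tf w i = a}" using card_inj_pre[OF fin, of "Tf w" a] iw True by (simp only:)
      also have "\<dots> = w a" using latw by simp
      finally show "u a = w a" .
    qed
    then show False using df by simp
  next
    case False
    then obtain l where l: "l \<in> L" "l \<notin> D" using D by blast
    let ?c = "Tf u l" and ?c2 = "Tf w l"
    let ?x = "u(?c := u ?c - 1)" and ?x2 = "w(?c2 := w ?c2 - 1)"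
    have sh: "?c \<in> {1..d}" "zo d ?x" "sum ?x {1..d} + 1 = card L" "add1 ?x ?c = u"
      using shrink[OF PT fin zu su l(1)] by auto
    have sh2: "?c2 \<in> {1..d}" "zo d ?x2" "sum ?x2 {1..d} + 1 = card L" "add1 ?x2 ?c2 = w"
      using shrink[OF PT fin zw sw l(1)] by auto
    let ?T = "contr Tf d l"
    have PT': "PT (L - {l}) d ?T" using CON[OF PT fin l(1) d] .
    have f1: "Tf (add1 ?x ?c) l = ?c" using sh(4) by simp
    have f2: "Tf (add1 ?x2 ?c2) l = ?c2" using sh2(4) by simp
    have e1: "\<forall>j\<in>L-{l}. ?T ?x j = Tf u j"
      using contr_eq[OF PT fin sh(2) sh(3) l(1) d sh(1) f1] by (simp only: sh(4))
    have e2: "\<forall>j\<in>L-{l}. ?T ?x2 j = Tf w j"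
      using contr_eq[OF PT fin sh2(2) sh2(3) l(1) d sh2(1) f2] by (simp only: sh2(4))
    have D': "D \<subseteq> L - {l}" using D l by blast
    have e1D: "\<And>j. j \<in> D \<Longrightarrow> ?T ?x j = Tf u j" using e1 D' by blast
    have e2D: "\<And>j. j \<in> D \<Longrightarrow> ?T ?x2 j = Tf w j" using e2 D' by blast
    have cL: "card (L - {l}) + 1 = card L" using fin l(1) by (metis Suc_eq_plus1 card_Suc_Diff1)
    show False
    proof (rule less.hyps[of "L - {l}" ?T ?x ?x2 D i])
      show "card (L - {l}) < card L" using cL by simp
      show "finite (L - {l})" using fin by simp
      show "PT (L - {l}) d ?T" by (rule PT')
      show "zo d ?x" by (rule sh(2))
      show "sum ?x {1..d} = card (L - {l})" using sh(3) cL by simp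
      show "zo d ?x2" by (rule sh2(2))
      show "sum ?x2 {1..d} = card (L - {l})" using sh2(3) cL by simp
      show "D \<subseteq> L - {l}" by (rule D')
      show "inj_on (?T ?x) D" using iu inj_on_cong[of D "?T ?x" "Tf u"] e1D by simp
      show "inj_on (?T ?x2) D" using iw inj_on_cong[of D "?T ?x2" "Tf w"] e2D by simp
      have "?T ?x ` D = Tf u ` D" by (rule image_cong[OF refl e1D])
      moreover have "?T ?x2 ` D = Tf w ` D" by (rule image_cong[OF refl e2D])
      ultimately show "?T ?x ` D = ?T ?x2 ` D" using im by simp
      show "i \<in> D" by (rule i)
      show "?T ?x i \<noteq> ?T ?x2 i" using e1D[OF i] e2D[OF i] df by simp
    qed
  qed
qed


lemma lat_iff: "lattice_point n d v \<longleftrightarrow> zo d v \<and> sum v {1..d} = card (left_verts n)"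
  unfolding lattice_point_def zo_def right_verts_def left_verts_def by simp

lemma pre_PT:
  assumes pre: "pre_trianguloid n d Tf"
  shows "PT (left_verts n) d Tf"
  unfolding PT_def
proof (intro conjI allI impI)
  fix v assume v: "zo d v \<and> sum v {1..d} = card (left_verts n)"
  then have lp: "lattice_point n d v" using lat_iff by blast
  then have t: "is_tope n d (Tf v)" and r: "RD n (Tf v) = v" using pre unfolding pre_trianguloid_def by auto
  show "\<forall>i\<in>left_verts n. Tf v i \<in> {1..d}" using t unfolding is_tope_def right_verts_def by simp
  fix a show "card {i \<in> left_verts n. Tf v i = a} = v a" using fun_cong[OF r, of a] unfolding RD_def .
next
  fix y a b assume zy: "zo d y" and sy: "sum y {1..d} + 1 = card (left_verts n)" and a: "a \<in> {1..d}" and b: "b \<in> {1..d}"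
  have l1: "lattice_point n d (add1 y a)" using lat_iff add1_zo[OF zy a] add1_sum[OF a, of y] sy by simp
  have l2: "lattice_point n d (add1 y b)" using lat_iff add1_zo[OF zy b] add1_sum[OF b, of y] sy by simp
  have mu: "minus_unit (add1 y a) a = minus_unit (add1 y b) b"
    unfolding minus_unit_def add1_def by auto
  have "tope_preimage n (Tf (add1 y b)) a \<subseteq> tope_preimage n (Tf (add1 y a)) a"
    using pre l1 l2 a b mu unfolding pre_trianguloid_def right_verts_def by blast
  then show "{i \<in> left_verts n. Tf (add1 y b) i = a} \<subseteq> {i \<in> left_verts n. Tf (add1 y a) i = a}"
    unfolding tope_preimage_def .
qed

lemma pre_compat:
  assumes pre: "pre_trianguloid n d Tf" and d: "0 < d"
    and lu: "lattice_point n d u" and lw: "lattice_point n d w"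
  shows "compatible n d (tope_graph n (Tf u)) (tope_graph n (Tf w))"
proof (rule compat_intro)
  fix I assume I: "I \<subseteq> left_verts n" and iu: "inj_on (Tf u) I" and iw: "inj_on (Tf w) I"
    and im: "Tf u ` I = Tf w ` I"
  show "\<forall>i\<in>I. Tf u i = Tf w i"
  proof (rule ballI, rule ccontr)
    fix i assume i: "i \<in> I" and df: "Tf u i \<noteq> Tf w i"
    have PT: "PT (left_verts n) d Tf" using pre_PT[OF pre] .
    have fin: "finite (left_verts n)" unfolding left_verts_def by simp
    have zu: "zo d u" "sum u {1..d} = card (left_verts n)" using lu lat_iff by auto
    have zw: "zo d w" "sum w {1..d} = card (left_verts n)" using lw lat_iff by auto
    show False using MAIN[of d "left_verts n" Tf u w I i] d fin PT zu zw I iu iw im i df by simp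
  qed
qed

lemma ext_pre:
  assumes ext: "extended_tope_arrangement n d Tf"
  shows "pre_trianguloid n d Tf"
  unfolding pre_trianguloid_def
proof (rule conjI; intro allI impI)
  fix v assume "lattice_point n d v"
  then show "is_tope n d (Tf v) \<and> RD n (Tf v) = v" using ext unfolding extended_tope_arrangement_def by blast
next
  fix v v' j j'
  assume lv: "lattice_point n d v" and lv': "lattice_point n d v'" and j: "j \<in> right_verts d"
    and j': "j' \<in> right_verts d" and mu: "minus_unit v j = minus_unit v' j'"
  let ?T = "Tf v" and ?T' = "Tf v'" and ?L = "left_verts n"
  have fin: "finite ?L" unfolding left_verts_def by simp
  have mk: "int (v k) - (if k = j then 1 else 0) = int (v' k) - (if k = j' then 1 else 0)" for k
    using fun_cong[OF mu, of k] unfolding minus_unit_def by simp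
  have tv: "is_tope n d ?T" "RD n ?T = v" and tv': "is_tope n d ?T'" "RD n ?T' = v'"
    using ext lv lv' unfolding extended_tope_arrangement_def by auto
  have comp: "compatible n d (tope_graph n ?T) (tope_graph n ?T')"
    using ext lv lv' unfolding extended_tope_arrangement_def by blast
  have cnt: "card {i\<in>?L. ?T i = a} = v a" "card {i\<in>?L. ?T' i = a} = v' a" for a
    using fun_cong[OF tv(2), of a] fun_cong[OF tv'(2), of a] unfolding RD_def by auto
  show "tope_preimage n ?T' j \<subseteq> tope_preimage n ?T j"
  proof (cases "j = j'")
    case True
    have "v = v'"
    proof
      fix k show "v k = v' k" using mk[of k] True by simp
    qed
    then show ?thesis by simp
  next
    case False
    show ?thesis
    proof (rule subsetI, rule ccontr)
      fix i0 assume i0: "i0 \<in> tope_preimage n ?T' j" and ni: "i0 \<notin> tope_preimage n ?T j"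
      have i0': "i0 \<in> ?L" "?T' i0 = j" "?T i0 \<noteq> j" using i0 ni unfolding tope_preimage_def by auto
      let ?E = "{i\<in>?L. ?T i \<noteq> ?T' i}"
      have finE: "finite ?E" using fin by simp
      have i0E: "i0 \<in> ?E" using i0' by simp
      then have neE: "?E \<noteq> {}" by blast
      have ge: "v a \<le> v' a" if "a \<noteq> j" for a using mk[of a] that by (cases "a = j'") auto
      have sub: "?T ` ?E \<subseteq> ?T' ` ?E"
      proof
        fix a assume "a \<in> ?T ` ?E"
        then obtain i where iE: "i \<in> ?E" and ia: "?T i = a" by blast
        show "a \<in> ?T' ` ?E"
        proof (cases "a = j")
          case True
          then show ?thesis using i0E i0'(2) by (metis image_eqI)
        next
          case aj: False
          have "\<exists>i'\<in>?L. ?T' i' = a \<and> ?T i' \<noteq> a"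
          proof (rule ccontr)
            assume "\<not> ?thesis"
            then have s: "{i\<in>?L. ?T' i = a} \<subseteq> {i\<in>?L. ?T i = a} - {i}" using iE ia by auto
            have "card {i\<in>?L. ?T' i = a} \<le> card ({i\<in>?L. ?T i = a} - {i})"
              using card_mono[OF _ s] fin by simp
            also have "\<dots> = card {i\<in>?L. ?T i = a} - 1" using iE ia by (simp add: card_Diff_singleton_if)
            finally have "v' a \<le> v a - 1" using cnt by simp
            moreover have "v a \<ge> 1"
            proof -
              have "i \<in> {i\<in>?L. ?T i = a}" using iE ia by simp
              then have "card {i\<in>?L. ?T i = a} > 0" using fin card_gt_0_iff by fastforce
              then show ?thesis using cnt by simp
            qed
            ultimately show False using ge[OF aj] by simp
          qed
          then obtain i' where "i' \<in> ?L" "?T' i' = a" "?T i' \<noteq> a" by blast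
          then have "i' \<in> ?E" "?T' i' = a" by auto
          then show ?thesis by (metis image_eqI)
        qed
      qed
      obtain I where I: "I \<subseteq> ?E" "I \<noteq> {}" "inj_on ?T I" "inj_on ?T' I" "?T ` I = ?T' ` I"
        using cyc[OF finE neE sub] by blast
      obtain i where iI: "i \<in> I" using I(2) by blast
      have "?T i \<noteq> ?T' i" using iI I(1) by auto
      moreover have "I \<subseteq> ?L" using I(1) by auto
      ultimately show False using compat_contra[OF comp tv(1) tv'(1) _ I(3) I(4) I(5) iI] by blast
    qed
  qed
qed

theorem mainTheorem7:
  fixes n d :: nat and Tf :: "(nat \<Rightarrow> nat) \<Rightarrow> (nat \<Rightarrow> nat)"
  assumes "0 < n" and "0 < d"
  shows "(pre_trianguloid n d Tf \<longrightarrow>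
            (\<forall>v v'. lattice_point n d v \<longrightarrow> lattice_point n d v' \<longrightarrow>
               compatible n d (tope_graph n (Tf v)) (tope_graph n (Tf v'))))
         \<and> (pre_trianguloid n d Tf \<longleftrightarrow> extended_tope_arrangement n d Tf)"
proof -
  have A: "pre_trianguloid n d Tf \<longrightarrow>
            (\<forall>v v'. lattice_point n d v \<longrightarrow> lattice_point n d v' \<longrightarrow>
               compatible n d (tope_graph n (Tf v)) (tope_graph n (Tf v')))"
    using pre_compat assms(2) by blast
  have B: "pre_trianguloid n d Tf \<longrightarrow> extended_tope_arrangement n d Tf"
  proof
    assume pre: "pre_trianguloid n d Tf"
    then show "extended_tope_arrangement n d Tf"
      unfolding extended_tope_arrangement_def
      using A pre unfolding pre_trianguloid_def by blast
  qed
  show ?thesis using A B ext_pre by blast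
qed

end
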